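(* If $f$ is $L$-smooth, then Muon with exact polar decomposition satisfies, for every $K\ge1$, $$\eta\sum_{k=0}^{K-1}\mathbb E\|\nabla f({\bm{X}}_k)\|_F\le f({\bm{X}}_0)-f_\star+\frac{Ld_0}{2}K\eta^2+\eta(1+\sqrt{d_0})\sum_{k=0}^{K-1}\mathbb E\|{\bm{S}}_k\|_F.$$
   Context: Norms on $\mathbb{R}^{m\times n}$: $\|\cdot\|_F$ Frobenius, $\|\cdot\|_{\mathrm{op}}$ spectral, $\|\cdot\|_*$ nuclear; $d_0:=\min\{m,n\}$. $f:\mathbb{R}^{m\times n}\to\mathbb R$ is differentiable with $f\ge f_\star>-\infty$; $L$-smooth means $\|\nabla f({\bm{X}})-\nabla f({\bm{Y}})\|_F\le L\|{\bm{X}}-{\bm{Y}}\|_F$ for all ${\bm{X}},{\bm{Y}}$. Muon: given $\beta\in(0,1)$, $\eta>0$, $B\in\mathbb N$, initial ${\bm{X}}_0,{\bm{C}}_{-1}$, for $k=0,1,\dots$: ${\bm{G}}_k=\frac1B\sum_{i=1}^B{\bm{G}}_k^i$ (stochastic gradient estimates), ${\bm{C}}_k=\beta{\bm{C}}_{k-1}+{\bm{G}}_k$, ${\bm{M}}_k=\beta{\bm{C}}_k+{\bm{G}}_k$, ${\bm{X}}_{k+1}={\bm{X}}_k-\eta\mathcal T({\bm{M}}_k)$, where with exact polar decomposition $\mathcal T({\bm{M}})={\bm{U}}{\bm{V}}^\top$ for a compact SVD ${\bm{M}}={\bm{U}}\bm\Sigma{\bm{V}}^\top$ ($\mathcal T(\mathbf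 0)=\mathbf 0$). $\widetilde{{\bm{M}}}_k:=(1-\beta){\bm{M}}_k$, ${\bm{S}}_k:=\widetilde{{\bm{M}}}_k-\nabla f({\bm{X}}_k)$. All expectations are assumed finite. *)

theory Defs
  imports "HOL-Analysis.Analysis" "HOL-Probability.Probability"
begin

text \<open>Real m x n matrices are modelled as real^'n^'m (entry (i,j) is M$i$j).
  The norm of this type is the Frobenius norm and its inner product the Frobenius inner product.\<close>

definition outer :: "real^'m \<Rightarrow> real^'n \<Rightarrow> real^'n^'m" where
  "outer u v = (\<chi> i j. u$i * v$j)"

text \<open>Compact SVD  M = U Sigma V^T  written as  M = sum_{i<r} sigma_i u_i v_i^T  with
  orthonormal columns u_0..u_{r-1}, v_0..v_{r-1} and positive singular values.\<close>
definition compact_svd ::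
  "real^'n^'m \<Rightarrow> nat \<Rightarrow> (nat \<Rightarrow> real^'m) \<Rightarrow> (nat \<Rightarrow> real^'n) \<Rightarrow> (nat \<Rightarrow> real) \<Rightarrow> bool" where
  "compact_svd M r u v \<sigma> \<longleftrightarrow>
     (\<forall>i<r. 0 < \<sigma> i) \<and>
     (\<forall>i<r. \<forall>j<r. inner (u i) (u j) = (if i = j then 1 else 0)) \<and>
     (\<forall>i<r. \<forall>j<r. inner (v i) (v j) = (if i = j then 1 else 0)) \<and>
     M = (\<Sum>i<r. \<sigma> i *\<^sub>R outer (u i) (v i))"

definition is_polar_op :: "(real^'n^'m \<Rightarrow> real^'n^'m) \<Rightarrow> bool" where
  "is_polar_op T \<longleftrightarrow> (\<forall>M. \<exists>r u v \<sigma>. compact_svd M r u v \<sigma> \<and> T M = (\<Sum>i<r. outer (u i) (v i)))"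

definition batch_grad :: "(nat \<Rightarrow> nat \<Rightarrow> 'w \<Rightarrow> real^'n^'m) \<Rightarrow> nat \<Rightarrow> 'w \<Rightarrow> nat \<Rightarrow> real^'n^'m" where
  "batch_grad G B \<omega> k = (1 / real B) *\<^sub>R (\<Sum>i=1..B. G k i \<omega>)"

text \<open>Muon state at step k: (X_k, C_{k-1}), given the mini-batch gradients Gb k = G_k.\<close>
fun muon_state ::
  "(real^'n^'m \<Rightarrow> real^'n^'m) \<Rightarrow> real \<Rightarrow> real \<Rightarrow> real^'n^'m \<Rightarrow> real^'n^'m
     \<Rightarrow> (nat \<Rightarrow> real^'n^'m) \<Rightarrow> nat \<Rightarrow> (real^'n^'m) \<times> (real^'n^'m)" where
  "muon_state T \<beta> \<eta> X0 Cm1 Gb 0 = (X0, Cm1)"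
| "muon_state T \<beta> \<eta> X0 Cm1 Gb (Suc k) =
     (let (X, C) = muon_state T \<beta> \<eta> X0 Cm1 Gb k;
          C' = \<beta> *\<^sub>R C + Gb k;
          M = \<beta> *\<^sub>R C' + Gb k
      in (X - \<eta> *\<^sub>R T M, C'))"

definition muon_X where
  "muon_X T \<beta> \<eta> X0 Cm1 Gb k = fst (muon_state T \<beta> \<eta> X0 Cm1 Gb k)"

definition muon_C where
  "muon_C T \<beta> \<eta> X0 Cm1 Gb k = \<beta> *\<^sub>R snd (muon_state T \<beta> \<eta> X0 Cm1 Gb k) + Gb k"

definition muon_M where
  "muon_M T \<beta> \<eta> X0 Cm1 Gb k = \<beta> *\<^sub>R muon_C T \<beta> \<eta> X0 Cm1 Gb k + Gb k"

end

theory Submission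
  imports Defs
begin

lemma descent:
  fixes f :: "'a::real_inner \<Rightarrow> real"
  assumes grad: "\<And>Y. GDERIV f Y :> grad Y"
    and smooth: "\<And>Y Z. norm (grad Y - grad Z) \<le> L * norm (Y - Z)"
  shows "f Y \<le> f X + inner (grad X) (Y - X) + L / 2 * (norm (Y - X))\<^sup>2"
proof -
  define D where "D = Y - X"
  define \<psi> where "\<psi> t = f (X + t *\<^sub>R D) - t * inner (grad X) D - L / 2 * t\<^sup>2 * (norm D)\<^sup>2" for t
  have df: "((\<lambda>t. f (X + t *\<^sub>R D)) has_real_derivative inner D (grad (X + t *\<^sub>R D))) (at t)" for t
  proof -
    have l: "((\<lambda>t. X + t *\<^sub>R D) has_derivative (\<lambda>h. h *\<^sub>R D)) (at t)"
      by (auto intro!: derivative_eq_intros)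
    have "((\<lambda>t. f (X + t *\<^sub>R D)) has_derivative (\<lambda>h. inner (h *\<^sub>R D) (grad (X + t *\<^sub>R D)))) (at t)"
      
      using has_derivative_compose[OF l grad[unfolded gderiv_def]] by simp
    moreover have "(\<lambda>h. h * (D \<bullet> grad (X + t *\<^sub>R D))) = (*) (D \<bullet> grad (X + t *\<^sub>R D))"
      by (rule ext) simp
    ultimately show ?thesis unfolding has_field_derivative_def
      by simp
  qed
  have dpsi: "(\<psi> has_real_derivative (inner D (grad (X + t *\<^sub>R D)) - inner (grad X) D - L * t * (norm D)\<^sup>2)) (at t)" for t
  proof -
    have p: "((\<lambda>t. t^2) has_real_derivative 2 * t ^ 1 * 1) (at t)"
      by (auto intro!: derivative_eq_intros)
    have "(\<psi> has_real_derivative (inner D (grad (X + t *\<^sub>R D)) - 1 * inner (grad X) D - L / 2 * (2 * t ^ 1 * 1) * (norm D)\<^sup>2)) (at t)"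
      unfolding \<psi>_def
      by (rule DERIV_diff DERIV_cmult_right DERIV_cmult df DERIV_ident p)+
    then show ?thesis by simp
  qed
  have dec: "\<psi> 1 \<le> \<psi> 0"
  proof (rule DERIV_nonpos_imp_decreasing_open[of 0 1 \<psi>])
    show "continuous_on {0..1} \<psi>"
      using dpsi by (meson DERIV_isCont continuous_at_imp_continuous_on)
    fix t :: real assume t: "0 < t" "t < 1"
    have "inner D (grad (X + t *\<^sub>R D)) - inner (grad X) D = inner (grad (X + t *\<^sub>R D) - grad X) D"
      by (simp add: inner_diff_left inner_diff_right inner_commute)
    also have "\<dots> \<le> norm (grad (X + t *\<^sub>R D) - grad X) * norm D"
      by (rule norm_cauchy_schwarz)
    also have "\<dots> \<le> L * norm (t *\<^sub>R D) * norm D"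
      using smooth[of "X + t *\<^sub>R D" X] by (intro mult_right_mono) auto
    also have "\<dots> = L * t * (norm D)\<^sup>2"
      using t by (simp add: power2_eq_square)
    finally show "\<exists>y. (\<psi> has_real_derivative y) (at t) \<and> y \<le> 0"
      using dpsi[of t] by (intro exI[of _ "inner D (grad (X + t *\<^sub>R D)) - inner (grad X) D - L * t * (norm D)\<^sup>2"]) auto
  qed auto
  then show ?thesis unfolding \<psi>_def D_def by simp
qed

lemma inner_outer: "inner (outer a b) (outer c d) = inner a c * inner b d"
  unfolding outer_def inner_vec_def
  apply (simp add: sum_product mult_ac)
  apply (subst sum.swap)
  apply (simp add: mult_ac)
  done

lemma orth_card:
  fixes u :: "nat \<Rightarrow> 'a::euclidean_space"
  assumes "\<forall>i<r. \<forall>j<r. inner (u i) (u j) = (if i = j then 1 else 0)"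
  shows "r \<le> DIM('a)"
proof -
  have inj: "inj_on u {..<r}"
  proof (rule inj_onI)
    fix i j assume "i \<in> {..<r}" "j \<in> {..<r}" "u i = u j"
    then show "i = j" using assms by (metis lessThan_iff zero_neq_one)
  qed
  have "pairwise orthogonal (u ` {..<r})"
    unfolding pairwise_def orthogonal_def using assms by auto
  moreover have "0 \<notin> u ` {..<r}" using assms by (auto) (metis inner_zero_left zero_neq_one)
  ultimately have "independent (u ` {..<r})" by (rule pairwise_orthogonal_independent)
  then have "card (u ` {..<r}) \<le> DIM('a)" using independent_bound by blast
  then show ?thesis using card_image[OF inj] by simp
qed

lemma polar_props:
  fixes T :: "real^'n^'m \<Rightarrow> real^'n^'m"
  assumes "is_polar_op T"
  shows "norm M \<le> inner M (T M)" and "(norm (T M))\<^sup>2 \<le> real (min CARD('m) CARD('n))"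
proof -
  obtain r u v \<sigma> where svd: "compact_svd M r u v \<sigma>" and TM: "T M = (\<Sum>i<r. outer (u i) (v i))"
    using assms unfolding is_polar_op_def by blast
  have pos: "\<forall>i<r. 0 < \<sigma> i"
    and uo: "\<forall>i<r. \<forall>j<r. inner (u i) (u j) = (if i = j then 1 else 0)"
    and vo: "\<forall>i<r. \<forall>j<r. inner (v i) (v j) = (if i = j then 1 else 0)"
    and M: "M = (\<Sum>i<r. \<sigma> i *\<^sub>R outer (u i) (v i))"
    using svd unfolding compact_svd_def by auto
  have oo: "inner (outer (u i) (v i)) (outer (u j) (v j)) = (if i = j then 1 else 0)" if "i < r" "j < r" for i j
    using uo vo that by (simp add: inner_outer)
  have "inner M (T M) = (\<Sum>i<r. \<Sum>j<r. \<sigma> i * inner (outer (u i) (v i)) (outer (u j) (v j)))"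
    unfolding TM unfolding M by (simp add: inner_sum_left inner_sum_right) (rule sum.swap)
  also have "\<dots> = (\<Sum>i<r. \<sigma> i)"
  proof (rule sum.cong[OF refl])
    fix i assume i: "i \<in> {..<r}"
    have "(\<Sum>j<r. \<sigma> i * inner (outer (u i) (v i)) (outer (u j) (v j))) = (\<Sum>j<r. if i = j then \<sigma> i else 0)"
      by (rule sum.cong[OF refl]) (use oo i in auto)
    then show "(\<Sum>j<r. \<sigma> i * inner (outer (u i) (v i)) (outer (u j) (v j))) = \<sigma> i" using i by simp
  qed
  finally have i1: "inner M (T M) = (\<Sum>i<r. \<sigma> i)" .
  have "norm M \<le> (\<Sum>i<r. norm (\<sigma> i *\<^sub>R outer (u i) (v i)))"
    unfolding M by (rule norm_sum)
  also have "\<dots> = (\<Sum>i<r. \<sigma> i)"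
  proof (rule sum.cong)
    fix i assume "i \<in> {..<r}"
    then have "norm (outer (u i) (v i)) = 1" using oo[of i i] by (simp add: norm_eq_1)
    then show "norm (\<sigma> i *\<^sub>R outer (u i) (v i)) = \<sigma> i"
      using pos \<open>i \<in> {..<r}\<close> by (simp add: less_imp_le)
  qed simp
  finally show "norm M \<le> inner M (T M)" using i1 by simp
  have "(norm (T M))\<^sup>2 = inner (T M) (T M)" by (simp add: power2_norm_eq_inner)
  also have "\<dots> = (\<Sum>i<r. \<Sum>j<r. inner (outer (u i) (v i)) (outer (u j) (v j)))"
    unfolding TM by (simp add: inner_sum_left inner_sum_right) (rule sum.swap)
  also have "\<dots> = (\<Sum>i<r. 1)"
  proof (rule sum.cong[OF refl])
    fix i assume i: "i \<in> {..<r}"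
    have "(\<Sum>j<r. inner (outer (u i) (v i)) (outer (u j) (v j))) = (\<Sum>j<r. if i = j then 1 else 0)"
      by (rule sum.cong[OF refl]) (use oo i in auto)
    then show "(\<Sum>j<r. inner (outer (u i) (v i)) (outer (u j) (v j))) = 1" using i by simp
  qed
  also have "\<dots> = real r" by simp
  finally have n2: "(norm (T M))\<^sup>2 = real r" .
  have "r \<le> DIM(real^'m)" by (rule orth_card[OF uo])
  moreover have "r \<le> DIM(real^'n)" by (rule orth_card[OF vo])
  ultimately show "(norm (T M))\<^sup>2 \<le> real (min CARD('m) CARD('n))" using n2 by simp
qed

lemma step_bound:
  fixes f :: "real^'n^'m \<Rightarrow> real" and T :: "real^'n^'m \<Rightarrow> real^'n^'m"
  assumes grad: "\<And>Y. GDERIV f Y :> grad Y"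
    and smooth: "\<And>Y Z. norm (grad Y - grad Z) \<le> L * norm (Y - Z)"
    and polar: "is_polar_op T" and eta: "0 < \<eta>" and beta: "\<beta> < 1" and L: "0 \<le> L"
  shows "f (Xk - \<eta> *\<^sub>R T Mk) \<le> f Xk - \<eta> * norm (grad Xk)
      + \<eta> * (1 + sqrt (real (min CARD('m) CARD('n)))) * norm ((1 - \<beta>) *\<^sub>R Mk - grad Xk)
      + L * real (min CARD('m) CARD('n)) / 2 * \<eta>\<^sup>2"
proof -
  define d where "d = real (min CARD('m) CARD('n))"
  define Ok where "Ok = T Mk"
  define g where "g = grad Xk"
  define S where "S = (1 - \<beta>) *\<^sub>R Mk - g"
  have O2: "(norm Ok)\<^sup>2 \<le> d" unfolding Ok_def d_def by (rule polar_props(2)[OF polar])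
  have nO: "norm Ok \<le> sqrt d" using O2 real_le_rsqrt by blast
  have d0: "0 \<le> d" unfolding d_def by simp
  have desc: "f (Xk - \<eta> *\<^sub>R Ok) \<le> f Xk + inner g (Xk - \<eta> *\<^sub>R Ok - Xk) + L / 2 * (norm (Xk - \<eta> *\<^sub>R Ok - Xk))\<^sup>2"
    unfolding g_def by (rule descent[OF grad smooth])
  have e1: "inner g (Xk - \<eta> *\<^sub>R Ok - Xk) = - \<eta> * inner g Ok" by simp
  have e2: "(norm (Xk - \<eta> *\<^sub>R Ok - Xk))\<^sup>2 = \<eta>\<^sup>2 * (norm Ok)\<^sup>2"
    using eta by (simp add: power_mult_distrib)
  have q: "L / 2 * (\<eta>\<^sup>2 * (norm Ok)\<^sup>2) \<le> L / 2 * (\<eta>\<^sup>2 * d)"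
    using O2 L by (intro mult_left_mono) auto
  have gdec: "g = (1 - \<beta>) *\<^sub>R Mk - S" unfolding S_def by simp
  have "inner ((1 - \<beta>) *\<^sub>R Mk) Ok = (1 - \<beta>) * inner Mk Ok" by simp
  also have "\<dots> \<ge> (1 - \<beta>) * norm Mk"
    using polar_props(1)[OF polar, of Mk] beta unfolding Ok_def by (intro mult_left_mono) auto
  finally have i1: "inner ((1 - \<beta>) *\<^sub>R Mk) Ok \<ge> norm ((1 - \<beta>) *\<^sub>R Mk)" using beta by simp
  have i2: "inner S Ok \<le> norm S * sqrt d"
    using norm_cauchy_schwarz[of S Ok] nO mult_left_mono[OF nO norm_ge_zero[of S]] by linarith
  have i3: "norm ((1 - \<beta>) *\<^sub>R Mk) \<ge> norm g - norm S"
    using norm_triangle_ineq4[of "(1 - \<beta>) *\<^sub>R Mk" S] gdec by simp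
  have ig: "inner g Ok \<ge> norm g - (1 + sqrt d) * norm S"
    using i1 i2 i3 unfolding gdec inner_diff_left by (simp add: algebra_simps)
  have "\<eta> * inner g Ok \<ge> \<eta> * (norm g - (1 + sqrt d) * norm S)"
    using ig eta by (intro mult_left_mono) auto
  then show ?thesis
    using desc e1 e2 q unfolding d_def[symmetric] Ok_def[symmetric] g_def[symmetric] S_def[symmetric]
    by (simp add: algebra_simps)
qed

theorem mainTheorem11:
  fixes f :: "real^'n^'m \<Rightarrow> real"
    and grad :: "real^'n^'m \<Rightarrow> real^'n^'m"
    and P :: "'w measure"
    and G :: "nat \<Rightarrow> nat \<Rightarrow> 'w \<Rightarrow> real^'n^'m"
    and T :: "real^'n^'m \<Rightarrow> real^'n^'m"
    and L fstar \<beta> \<eta> :: real and B K :: nat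
    and X0 Cm1 :: "real^'n^'m"
  defines "d0 \<equiv> min CARD('m) CARD('n)"
    and "X \<equiv> (\<lambda>k \<omega>. muon_X T \<beta> \<eta> X0 Cm1 (batch_grad G B \<omega>) k)"
    and "S \<equiv> (\<lambda>k \<omega>. (1 - \<beta>) *\<^sub>R muon_M T \<beta> \<eta> X0 Cm1 (batch_grad G B \<omega>) k
                       - grad (muon_X T \<beta> \<eta> X0 Cm1 (batch_grad G B \<omega>) k))"
  assumes grad: "\<And>Y. GDERIV f Y :> grad Y"
    and lower: "\<And>Y. fstar \<le> f Y"
    and smooth: "\<And>Y Z. norm (grad Y - grad Z) \<le> L * norm (Y - Z)"
    and polar: "is_polar_op T"
    and P: "prob_space P"
    and beta: "0 < \<beta>" "\<beta> < 1"
    and eta: "0 < \<eta>"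
    and B: "1 \<le> B"
    and int_grad: "\<And>k. integrable P (\<lambda>\<omega>. norm (grad (X k \<omega>)))"
    and int_S: "\<And>k. integrable P (\<lambda>\<omega>. norm (S k \<omega>))"
    and K: "1 \<le> K"
  shows "\<eta> * (\<Sum>k<K. (\<integral>\<omega>. norm (grad (X k \<omega>)) \<partial>P))
         \<le> f X0 - fstar + L * real d0 / 2 * real K * \<eta>\<^sup>2
            + \<eta> * (1 + sqrt (real d0)) * (\<Sum>k<K. (\<integral>\<omega>. norm (S k \<omega>) \<partial>P))"
proof -
  have L0: "0 \<le> L"
  proof -
    define Y :: "real^'n^'m" where "Y = (\<chi> i j. 1)"
    have "Y \<noteq> 0" unfolding Y_def by (metis vec_lambda_beta zero_index zero_neq_one)
    then have "norm Y > 0" by simp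
    moreover have "0 \<le> L * norm (Y - 0)" using smooth[of Y 0] norm_ge_zero order_trans by blast
    ultimately show ?thesis by (simp add: zero_le_mult_iff)
  qed
  have Xsuc: "X (Suc k) \<omega> = X k \<omega> - \<eta> *\<^sub>R T (muon_M T \<beta> \<eta> X0 Cm1 (batch_grad G B \<omega>) k)" for k \<omega>
    unfolding X_def muon_X_def muon_M_def muon_C_def by (simp add: Let_def split: prod.split)
  have X0: "X 0 \<omega> = X0" for \<omega> unfolding X_def muon_X_def by simp
  have Sdef: "S k \<omega> = (1 - \<beta>) *\<^sub>R muon_M T \<beta> \<eta> X0 Cm1 (batch_grad G B \<omega>) k - grad (X k \<omega>)" for k \<omega>
    unfolding S_def X_def by simp
  have stepk: "f (X (Suc k) \<omega>) \<le> f (X k \<omega>) - \<eta> * norm (grad (X k \<omega>))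
      + \<eta> * (1 + sqrt (real d0)) * norm (S k \<omega>) + L * real d0 / 2 * \<eta>\<^sup>2" for k \<omega>
    unfolding Xsuc Sdef d0_def by (rule step_bound[OF grad smooth polar eta beta(2) L0])
  have tel: "f (X N \<omega>) \<le> f X0 - \<eta> * (\<Sum>k<N. norm (grad (X k \<omega>)))
      + \<eta> * (1 + sqrt (real d0)) * (\<Sum>k<N. norm (S k \<omega>)) + real N * (L * real d0 / 2 * \<eta>\<^sup>2)" for N \<omega>
  proof (induction N)
    case 0 then show ?case by (simp add: X0)
  next
    case (Suc N)
    then show ?case using stepk[of N \<omega>] by (simp add: algebra_simps add_divide_distrib)
  qed
  define c where "c = f X0 - fstar + L * real d0 / 2 * real K * \<eta>\<^sup>2"
  have pw: "\<eta> * (\<Sum>k<K. norm (grad (X k \<omega>))) \<le> c + \<eta> * (1 + sqrt (real d0)) * (\<Sum>k<K. norm (S k \<omega>))" for \<omega>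
    using tel[of K \<omega>] lower[of "X K \<omega>"] unfolding c_def by (simp add: algebra_simps)
  have iG: "integrable P (\<lambda>\<omega>. \<eta> * (\<Sum>k<K. norm (grad (X k \<omega>))))"
    using int_grad by auto
  have iSs: "integrable P (\<lambda>\<omega>. \<Sum>k<K. norm (S k \<omega>))"
    by (rule Bochner_Integration.integrable_sum) (rule int_S)
  have iS: "integrable P (\<lambda>\<omega>. c + \<eta> * (1 + sqrt (real d0)) * (\<Sum>k<K. norm (S k \<omega>)))"
    by (rule Bochner_Integration.integrable_add[OF finite_measure.integrable_const[OF prob_space.finite_measure[OF P]] integrable_mult_right[OF iSs]])
  have "(\<integral>\<omega>. \<eta> * (\<Sum>k<K. norm (grad (X k \<omega>))) \<partial>P) \<le> (\<integral>\<omega>. c + \<eta> * (1 + sqrt (real d0)) * (\<Sum>k<K. norm (S k \<omega>)) \<partial>P)"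
    by (rule integral_mono[OF iG iS pw])
  moreover have "(\<integral>\<omega>. \<eta> * (\<Sum>k<K. norm (grad (X k \<omega>))) \<partial>P) = \<eta> * (\<Sum>k<K. (\<integral>\<omega>. norm (grad (X k \<omega>)) \<partial>P))"
    by (simp only: integral_mult_right_zero Bochner_Integration.integral_sum[OF int_grad])
  moreover have "(\<integral>\<omega>. c + \<eta> * (1 + sqrt (real d0)) * (\<Sum>k<K. norm (S k \<omega>)) \<partial>P)
      = c + \<eta> * (1 + sqrt (real d0)) * (\<Sum>k<K. (\<integral>\<omega>. norm (S k \<omega>) \<partial>P))"
  proof -
    have "(\<integral>\<omega>. c + \<eta> * (1 + sqrt (real d0)) * (\<Sum>k<K. norm (S k \<omega>)) \<partial>P)
      = (\<integral>\<omega>. c \<partial>P) + (\<integral>\<omega>. \<eta> * (1 + sqrt (real d0)) * (\<Sum>k<K. norm (S k \<omega>)) \<partial>P)"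
      by (rule Bochner_Integration.integral_add[OF finite_measure.integrable_const[OF prob_space.finite_measure[OF P]] integrable_mult_right[OF iSs]])
    also have "(\<integral>\<omega>. c \<partial>P) = c" using prob_space.prob_space[OF P] by simp
    also have "(\<integral>\<omega>. \<eta> * (1 + sqrt (real d0)) * (\<Sum>k<K. norm (S k \<omega>)) \<partial>P)
        = \<eta> * (1 + sqrt (real d0)) * (\<integral>\<omega>. (\<Sum>k<K. norm (S k \<omega>)) \<partial>P)"
      by (rule integral_mult_right_zero)
    also have "(\<integral>\<omega>. (\<Sum>k<K. norm (S k \<omega>)) \<partial>P) = (\<Sum>k<K. (\<integral>\<omega>. norm (S k \<omega>) \<partial>P))"
      by (rule Bochner_Integration.integral_sum) (rule int_S)
    finally show ?thesis .
  qed
  ultimately show ?thesis unfolding c_def by linarith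
qed

end
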